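(* Let $T$ be the DFS tree produced by DFS-v1 or DFS-v2 on a temporal graph $G$ from source $s$ with starting time $t_s$. Then no root-to-leaf path of $T$ contains two distinct occurrences of the same vertex of $G$; equivalently, no vertex of $G$ is, along a single root-to-leaf path, both an ancestor and a descendant of an occurrence of another vertex.
   Context: A temporal graph is a pair $G=(V,E)$ where $V$ is a finite set of vertices and $E$ is a finite set of temporal edges, i.e. triples $(u,v,t)$ with $u,v\in V$, $u\neq v$, $t\in\mathbb{R}$ (the time at which the edge is active); distinct elements of $E$ are distinct triples. Fix a starting time $t_s\in\mathbb{R}$ and a source vertex $s\in V$. Temporal DFS (versions v1 and v2). The procedure maintains a value $\sigma(x)\in\mathbb{R}\cup\{\infty\}$ for every $x\in V$, initially $\infty$, and a set of already traversed edges, initially empty, and builds a rooted tree $T$ whose nodes are occurrences of vertices of $G$ (a vertex may occur several times in $T$). Each occurrence carries a label, namely the value assigned to $\sigma(x)$ when that occurrence was created. Start: create the root occurrence of $s$, set $\sigma(s)=t_s$ (its label), and make it the current occurrence. Step (a): let $u$ be the vertex of the current occurrence, $\sigma_u$ its label, and $A$ the set of edges $(u,v,t)\in E$ not yet traversed with $\sigma_u\le t$. If $A=\emptyset$: if the current occurrence is the root, terminate; otherwise make its parent occurrence current (backtrack) and repeat step (a). If $A\neq\emptyset$, select an edge $e=(u,v,t)\in A$ by the selection rule, mark $e$ as traversed and go to step (b). Step (b): if the current value $\sigma(v)$ satisfies $\sigma(v)>t$, create a new occurrence of $v$ as a child of the current occurrence, set $\sigma(v):=t$ (so the new occurrence has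 label $t$), call $e$ a tree edge, make the new occurrence current and go to step (a); otherwise go to step (a) with the same current occurrence. Selection rule of DFS-v1: choose any vertex $v$ such that $A$ contains an edge to $v$, and select the edge of $A$ to $v$ with the smallest time. Selection rule of DFS-v2: select an edge of $A$ with the largest time. All remaining choices are arbitrary. $T$ is the DFS tree; its edges are the tree edges. *)

theory Defs
  imports Main "HOL-Library.Extended_Real"
begin

definition temporal_graph :: "'v set \<Rightarrow> ('v \<times> 'v \<times> real) set \<Rightarrow> bool" where
  "temporal_graph V E \<longleftrightarrow> finite V \<and> finite E \<and>
     (\<forall>(u, v, t) \<in> E. u \<in> V \<and> v \<in> V \<and> u \<noteq> v)"

text \<open>Occurrence number i of the tree is
  occs ! i = (vertex, label, parent occurrence); occurrence 0 is the root
  (parent None).  sig is sigma (infinity = not yet assigned), trav is the set of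
  already traversed edges, fin says that the procedure has terminated.\<close>
record 'v dfs_state =
  occs :: "('v \<times> real \<times> nat option) list"
  cur :: nat
  sig :: "'v \<Rightarrow> ereal"
  trav :: "('v \<times> 'v \<times> real) set"
  fin :: bool

datatype dfs_version = DFS_v1 | DFS_v2

definition select_edge :: "dfs_version \<Rightarrow> ('v \<times> 'v \<times> real) set \<Rightarrow> ('v \<times> 'v \<times> real) \<Rightarrow> bool" where
  "select_edge ver A e \<longleftrightarrow> e \<in> A \<and>
     (case ver of
        DFS_v1 \<Rightarrow> (\<forall>e' \<in> A. fst (snd e') = fst (snd e) \<longrightarrow> snd (snd e) \<le> snd (snd e'))
      | DFS_v2 \<Rightarrow> (\<forall>e' \<in> A. snd (snd e') \<le> snd (snd e)))"

definition avail :: "('v \<times> 'v \<times> real) set \<Rightarrow> 'v dfs_state \<Rightarrow> ('v \<times> 'v \<times> real) set" where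
  "avail E st = {e \<in> E. fst e = fst (occs st ! cur st) \<and> e \<notin> trav st \<and>
                       fst (snd (occs st ! cur st)) \<le> snd (snd e)}"

definition dfs_init :: "'v \<Rightarrow> real \<Rightarrow> 'v dfs_state" where
  "dfs_init s ts = \<lparr> occs = [(s, ts, None)], cur = 0, sig = (\<lambda>_. \<infinity>)(s := ereal ts),
                     trav = {}, fin = False \<rparr>"

inductive dfs_step :: "dfs_version \<Rightarrow> ('v \<times> 'v \<times> real) set \<Rightarrow> 'v dfs_state \<Rightarrow> 'v dfs_state \<Rightarrow> bool"
  for ver E where
  terminate: "\<lbrakk> \<not> fin st; avail E st = {}; cur st = 0 \<rbrakk>
     \<Longrightarrow> dfs_step ver E st (st\<lparr> fin := True \<rparr>)"
| backtrack: "\<lbrakk> \<not> fin st; avail E st = {}; cur st \<noteq> 0;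
               snd (snd (occs st ! cur st)) = Some p \<rbrakk>
     \<Longrightarrow> dfs_step ver E st (st\<lparr> cur := p \<rparr>)"
| tree_edge: "\<lbrakk> \<not> fin st; select_edge ver (avail E st) (u, v, t); sig st v > ereal t \<rbrakk>
     \<Longrightarrow> dfs_step ver E st (st\<lparr> occs := occs st @ [(v, t, Some (cur st))],
                               cur := length (occs st),
                               sig := (sig st)(v := ereal t),
                               trav := insert (u, v, t) (trav st) \<rparr>)"
| non_tree_edge: "\<lbrakk> \<not> fin st; select_edge ver (avail E st) (u, v, t); \<not> sig st v > ereal t \<rbrakk>
     \<Longrightarrow> dfs_step ver E st (st\<lparr> trav := insert (u, v, t) (trav st) \<rparr>)"

definition tree_rel :: "'v dfs_state \<Rightarrow> (nat \<times> nat) set" where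
  "tree_rel st = {(p, c). c < length (occs st) \<and> snd (snd (occs st ! c)) = Some p}"

end

theory Submission
  imports Defs
begin

definition dinv :: "'v dfs_state \<Rightarrow> bool" where
"dinv st \<longleftrightarrow> cur st < length (occs st) \<and>
 (\<forall>c<length (occs st). \<forall>p. snd (snd (occs st ! c)) = Some p \<longrightarrow> p < c \<and> fst (snd (occs st ! p)) \<le> fst (snd (occs st ! c))) \<and>
 (\<forall>c<length (occs st). sig st (fst (occs st ! c)) \<le> ereal (fst (snd (occs st ! c)))) \<and>
 (\<forall>i j. i < j \<longrightarrow> j < length (occs st) \<longrightarrow> fst (occs st ! i) = fst (occs st ! j) \<longrightarrow> fst (snd (occs st ! j)) < fst (snd (occs st ! i)))"

lemma dinv_init: "dinv (dfs_init s ts)"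
  by (simp add: dinv_def dfs_init_def)

lemma dinv_step:
  assumes "dfs_step ver E st st'" "dinv st"
  shows "dinv st'"
  using assms
proof (induction rule: dfs_step.induct)
  case (terminate st)
  then show ?case by (simp add: dinv_def)
next
  case (backtrack st p)
  then show ?case by (auto simp add: dinv_def)
next
  case (tree_edge st u v t)
  let ?o = "occs st" and ?n = "length (occs st)"
  have av: "(u, v, t) \<in> avail E st" using tree_edge(2) by (simp add: select_edge_def)
  hence lt: "fst (snd (?o ! cur st)) \<le> t" by (simp add: avail_def)
  have I: "cur st < ?n"
    "\<And>c p. c < ?n \<Longrightarrow> snd (snd (?o ! c)) = Some p \<Longrightarrow> p < c \<and> fst (snd (?o ! p)) \<le> fst (snd (?o ! c))"
    "\<And>c. c < ?n \<Longrightarrow> sig st (fst (?o ! c)) \<le> ereal (fst (snd (?o ! c)))"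
    "\<And>i j. i < j \<Longrightarrow> j < ?n \<Longrightarrow> fst (?o ! i) = fst (?o ! j) \<Longrightarrow> fst (snd (?o ! j)) < fst (snd (?o ! i))"
    using tree_edge(4) unfolding dinv_def by blast+
  have sv: "ereal t < sig st v" using tree_edge(3) by simp
  have P: "\<forall>c<Suc ?n. \<forall>p. snd (snd ((?o @ [(v, t, Some (cur st))]) ! c)) = Some p \<longrightarrow> p < c \<and> fst (snd ((?o @ [(v, t, Some (cur st))]) ! p)) \<le> fst (snd ((?o @ [(v, t, Some (cur st))]) ! c))"
  proof (intro allI impI)
    fix c p assume c: "c < Suc ?n" and pc: "snd (snd ((?o @ [(v, t, Some (cur st))]) ! c)) = Some p"
    show "p < c \<and> fst (snd ((?o @ [(v, t, Some (cur st))]) ! p)) \<le> fst (snd ((?o @ [(v, t, Some (cur st))]) ! c))"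
    proof (cases "c < ?n")
      case True
      with pc I(2)[of c p] show ?thesis by (simp add: nth_append)
    next
      case False
      hence "c = ?n" using c by simp
      with pc I(1) lt show ?thesis by (simp add: nth_append)
    qed
  qed
  have S: "\<forall>c<Suc ?n. ((sig st)(v := ereal t)) (fst ((?o @ [(v, t, Some (cur st))]) ! c)) \<le> ereal (fst (snd ((?o @ [(v, t, Some (cur st))]) ! c)))"
  proof (intro allI impI)
    fix c assume c: "c < Suc ?n"
    show "((sig st)(v := ereal t)) (fst ((?o @ [(v, t, Some (cur st))]) ! c)) \<le> ereal (fst (snd ((?o @ [(v, t, Some (cur st))]) ! c)))"
    proof (cases "c < ?n")
      case True
      have "ereal t \<le> ereal (fst (snd (?o ! c)))" if "fst (?o ! c) = v"
      proof -
          have "ereal t < ereal (fst (snd (?o ! c)))" 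
          proof -
            have "sig st v \<le> ereal (fst (snd (?o ! c)))" using I(3)[OF True] unfolding that .
            show ?thesis using sv \<open>sig st v \<le> _\<close> by (rule less_le_trans)
          qed
          thus ?thesis by (rule less_imp_le)
        qed
      hence "((sig st)(v := ereal t)) (fst (?o ! c)) \<le> ereal (fst (snd (?o ! c)))"
        using I(3)[OF True] by (cases "fst (?o ! c) = v") auto
      with True show ?thesis by (simp add: nth_append)
    next
      case False
      hence "c = ?n" using c by simp
      thus ?thesis by (simp add: nth_append)
    qed
  qed
  have D: "\<forall>i j. i < j \<longrightarrow> j < Suc ?n \<longrightarrow> fst ((?o @ [(v, t, Some (cur st))]) ! i) = fst ((?o @ [(v, t, Some (cur st))]) ! j) \<longrightarrow> fst (snd ((?o @ [(v, t, Some (cur st))]) ! j)) < fst (snd ((?o @ [(v, t, Some (cur st))]) ! i))"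
  proof (intro allI impI)
    fix i j assume ij: "i < j" "j < Suc ?n"
      and eq: "fst ((?o @ [(v, t, Some (cur st))]) ! i) = fst ((?o @ [(v, t, Some (cur st))]) ! j)"
    show "fst (snd ((?o @ [(v, t, Some (cur st))]) ! j)) < fst (snd ((?o @ [(v, t, Some (cur st))]) ! i))"
    proof (cases "j < ?n")
      case True
      with ij eq I(4)[of i j] show ?thesis by (simp add: nth_append)
    next
      case False
      hence j: "j = ?n" using ij by simp
      have i: "i < ?n" using ij j by simp
      have "fst (?o ! i) = v" using eq i j by (simp add: nth_append)
      hence "sig st v \<le> ereal (fst (snd (?o ! i)))" using I(3)[OF i] by simp
      with sv have "ereal t < ereal (fst (snd (?o ! i)))" by (rule less_le_trans)
      hence "t < fst (snd (?o ! i))" by simp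
      thus ?thesis using i j by (simp add: nth_append)
    qed
  qed
  show ?case unfolding dinv_def using P S D by simp
next
  case (non_tree_edge st u v t)
  then show ?case by (simp add: dinv_def)
qed

lemma dinv_reach:
  assumes "(dfs_step ver E)\<^sup>*\<^sup>* (dfs_init s ts) st"
  shows "dinv st"
  using assms
  by (induction rule: rtranclp_induct) (auto intro: dinv_init dinv_step)

lemma trancl_mono_lab:
  assumes "dinv st" "(i, j) \<in> (tree_rel st)\<^sup>+"
  shows "i < j \<and> j < length (occs st) \<and> fst (snd (occs st ! i)) \<le> fst (snd (occs st ! j))"
  using assms(2)
proof (induction rule: trancl_induct)
  case (base y)
  then show ?case using assms(1) unfolding tree_rel_def dinv_def by auto
next
  case (step y z)
  have "y < z \<and> z < length (occs st) \<and> fst (snd (occs st ! y)) \<le> fst (snd (occs st ! z))"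
    using step(2) assms(1) unfolding tree_rel_def dinv_def by auto
  with step(3) show ?case by auto
qed

theorem lemma4:
  fixes V :: "'v set" and E :: "('v \<times> 'v \<times> real) set" and s :: 'v and ts :: real
    and ver :: dfs_version and st :: "'v dfs_state"
  assumes "temporal_graph V E" and "s \<in> V"
    and "(dfs_step ver E)\<^sup>*\<^sup>* (dfs_init s ts) st" and "fin st"
    and "(i, j) \<in> (tree_rel st)\<^sup>+"
  shows "fst (occs st ! i) \<noteq> fst (occs st ! j)"
proof
  assume eq: "fst (occs st ! i) = fst (occs st ! j)"
  have d: "dinv st" using dinv_reach[OF assms(3)] .
  from trancl_mono_lab[OF d assms(5)] have m: "i < j" "j < length (occs st)"
    "fst (snd (occs st ! i)) \<le> fst (snd (occs st ! j))" by auto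
  with d eq have "fst (snd (occs st ! j)) < fst (snd (occs st ! i))" unfolding dinv_def by blast
  with m(3) show False by simp
qed

end
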